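(* Let $T$ be a tree on $t$ vertices. Then for every positive integer $n$, $\mathrm{ex}^*(n,T,2)\leq 2tn$; that is, every $n$-vertex graph containing no copy of $C_4=K_{2,2}$ as a subgraph and no induced copy of $T$ has at most $2tn$ edges.
   Context: For a graph $H$ and integers $n,s\geq 1$, $\mathrm{ex}^*(n,H,s)$ denotes the maximum number of edges in an $n$-vertex graph which contains no copy of $K_{s,s}$ as a (not necessarily induced) subgraph and contains no induced copy of $H$. *)

theory Defs
  imports Main
begin

text \<open>A finite simple graph: finite vertex set V and a symmetric, irreflexive
  adjacency relation E (only its restriction to V matters).\<close>
definition sgraph :: "'a set \<Rightarrow> ('a \<Rightarrow> 'a \<Rightarrow> bool) \<Rightarrow> bool" where
  "sgraph V E \<longleftrightarrow> finite V \<and> (\<forall>u\<in>V. \<forall>v\<in>V. E u v \<longrightarrow> E v u) \<and> (\<forall>v\<in>V. \<not> E v v)"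

definition edges :: "'a set \<Rightarrow> ('a \<Rightarrow> 'a \<Rightarrow> bool) \<Rightarrow> 'a set set" where
  "edges V E = {{u, v} | u v. u \<in> V \<and> v \<in> V \<and> E u v}"

definition connected_graph :: "'a set \<Rightarrow> ('a \<Rightarrow> 'a \<Rightarrow> bool) \<Rightarrow> bool" where
  "connected_graph V E \<longleftrightarrow>
     (\<forall>u\<in>V. \<forall>v\<in>V. (\<lambda>x y. x \<in> V \<and> y \<in> V \<and> E x y)\<^sup>*\<^sup>* u v)"

definition is_cycle :: "'a set \<Rightarrow> ('a \<Rightarrow> 'a \<Rightarrow> bool) \<Rightarrow> 'a list \<Rightarrow> bool" where
  "is_cycle V E cs \<longleftrightarrow> length cs \<ge> 3 \<and> distinct cs \<and> set cs \<subseteq> V \<and>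
     (\<forall>i. Suc i < length cs \<longrightarrow> E (cs ! i) (cs ! Suc i)) \<and> E (last cs) (hd cs)"

definition acyclic_graph :: "'a set \<Rightarrow> ('a \<Rightarrow> 'a \<Rightarrow> bool) \<Rightarrow> bool" where
  "acyclic_graph V E \<longleftrightarrow> (\<nexists>cs. is_cycle V E cs)"

definition is_tree :: "'a set \<Rightarrow> ('a \<Rightarrow> 'a \<Rightarrow> bool) \<Rightarrow> bool" where
  "is_tree V E \<longleftrightarrow> sgraph V E \<and> V \<noteq> {} \<and> connected_graph V E \<and> acyclic_graph V E"

definition has_induced_copy ::
  "'a set \<Rightarrow> ('a \<Rightarrow> 'a \<Rightarrow> bool) \<Rightarrow> 'b set \<Rightarrow> ('b \<Rightarrow> 'b \<Rightarrow> bool) \<Rightarrow> bool" where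
  "has_induced_copy V E VH EH \<longleftrightarrow>
     (\<exists>f. inj_on f VH \<and> f ` VH \<subseteq> V \<and>
          (\<forall>u\<in>VH. \<forall>v\<in>VH. EH u v \<longleftrightarrow> E (f u) (f v)))"

definition has_Kss :: "'a set \<Rightarrow> ('a \<Rightarrow> 'a \<Rightarrow> bool) \<Rightarrow> nat \<Rightarrow> bool" where
  "has_Kss V E s \<longleftrightarrow>
     (\<exists>A B. A \<subseteq> V \<and> B \<subseteq> V \<and> A \<inter> B = {} \<and> card A = s \<and> card B = s \<and>
            (\<forall>a\<in>A. \<forall>b\<in>B. E a b))"

end

theory Submission
  imports Defs "HOL-Library.Transitive_Closure_Table"
begin

definition connS :: "('b \<Rightarrow> 'b \<Rightarrow> bool) \<Rightarrow> 'b set \<Rightarrow> bool" where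
  "connS ET S \<longleftrightarrow> (\<forall>a\<in>S. \<forall>b\<in>S. (\<lambda>p q. p \<in> S \<and> q \<in> S \<and> ET p q)\<^sup>*\<^sup>* a b)"

lemma path_props:
  "rtrancl_path r x xs y \<Longrightarrow>
     (\<forall>i<length xs. r ((x#xs)!i) ((x#xs)!Suc i)) \<and> last (x#xs) = y"
proof (induction rule: rtrancl_path.induct)
  case (base x)
  then show ?case by simp
next
  case (step x y ys z)
  have "\<forall>i<length (y#ys). r ((x#y#ys)!i) ((x#y#ys)!Suc i)"
  proof (intro allI impI)
    fix i assume "i < length (y#ys)"
    then show "r ((x#y#ys)!i) ((x#y#ys)!Suc i)"
      using step by (cases i) auto
  qed
  moreover have "last (x#y#ys) = z" using step by simp
  ultimately show ?case by simp
qed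

lemma path_in_S:
  "rtrancl_path (\<lambda>p q. p \<in> S \<and> q \<in> S \<and> ET p q) x xs y \<Longrightarrow> set xs \<subseteq> S"
  by (induction rule: rtrancl_path.induct) auto

lemma tree_unique_nbr:
  assumes T: "is_tree VT ET" and "S \<subseteq> VT" and c: "connS ET S" and "x \<in> VT" "x \<notin> S"
    and "u \<in> S" "w \<in> S" "ET x u" "ET x w"
  shows "u = w"
proof (rule ccontr)
  assume uw: "u \<noteq> w"
  let ?R = "\<lambda>p q. p \<in> S \<and> q \<in> S \<and> ET p q"
  from c \<open>u \<in> S\<close> \<open>w \<in> S\<close> have "?R\<^sup>*\<^sup>* u w" unfolding connS_def by blast
  then have "\<exists>xs. rtrancl_path ?R u xs w" by (simp only: rtranclp_eq_rtrancl_path)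
  then obtain xs where p0: "rtrancl_path ?R u xs w" by blast
  obtain ys where p: "rtrancl_path ?R u ys w" and d: "distinct (u # ys)" and "set ys \<subseteq> set xs"
    by (rule rtrancl_path_distinct[OF p0])
  have ysS: "set ys \<subseteq> S" using path_in_S[OF p] .
  have ne: "ys \<noteq> []"
  proof
    assume "ys = []"
    with p have "rtrancl_path ?R u [] w" by simp
    then have "u = w" by cases auto
    with uw show False by simp
  qed
  note pp = path_props[OF p]
  define cs where "cs = x # u # ys"
  have sg: "sgraph VT ET" using T unfolding is_tree_def by simp
  have "is_cycle VT ET cs"
    unfolding is_cycle_def
  proof (intro conjI allI impI)
    show "3 \<le> length cs" using ne unfolding cs_def by (cases ys) auto
    show "distinct cs" using d ysS \<open>x \<notin> S\<close> \<open>u \<in> S\<close> unfolding cs_def by auto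
    show "set cs \<subseteq> VT" using ysS \<open>S \<subseteq> VT\<close> \<open>x \<in> VT\<close> \<open>u \<in> S\<close> unfolding cs_def by auto
    fix i assume i: "Suc i < length cs"
    show "ET (cs ! i) (cs ! Suc i)"
    proof (cases i)
      case 0 then show ?thesis using \<open>ET x u\<close> unfolding cs_def by simp
    next
      case (Suc j)
      then have "j < length ys" using i unfolding cs_def by simp
      then have "?R ((u#ys)!j) ((u#ys)!Suc j)" using pp by blast
      then show ?thesis using Suc unfolding cs_def by simp
    qed
  next
    have "last cs = w" using pp unfolding cs_def by simp
    moreover have "ET w x" using sg \<open>ET x w\<close> \<open>x \<in> VT\<close> \<open>w \<in> S\<close> \<open>S \<subseteq> VT\<close>
      unfolding sgraph_def by blast
    ultimately show "ET (last cs) (hd cs)" unfolding cs_def by simp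
  qed
  then show False using T unfolding is_tree_def acyclic_graph_def by blast
qed

lemma crossing:
  assumes "(\<lambda>x y. x \<in> VT \<and> y \<in> VT \<and> ET x y)\<^sup>*\<^sup>* a b" "a \<in> S" "b \<notin> S"
  shows "\<exists>p q. p \<in> S \<and> q \<notin> S \<and> p \<in> VT \<and> q \<in> VT \<and> ET p q"
  using assms
proof (induction rule: rtranclp_induct)
  case base then show ?case by simp
next
  case (step y z)
  show ?case
  proof (cases "y \<in> S")
    case True then show ?thesis using step by blast
  next
    case False then show ?thesis using step by blast
  qed
qed

lemma connS_insert:
  assumes "connS ET S" "u \<in> S" "ET u x" "ET x u"
  shows "connS ET (insert x S)"
proof -
  let ?R = "\<lambda>p q. p \<in> S \<and> q \<in> S \<and> ET p q"
  let ?R' = "\<lambda>p q. p \<in> insert x S \<and> q \<in> insert x S \<and> ET p q"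
  have mono: "?R'\<^sup>*\<^sup>* a b" if "a \<in> S" "b \<in> S" for a b
  proof -
    have "?R\<^sup>*\<^sup>* a b" using assms(1) that unfolding connS_def by blast
    then show ?thesis by (rule rtranclp_mono[THEN predicate2D, rotated]) auto
  qed
  have ux: "?R'\<^sup>*\<^sup>* u x" using assms by (intro r_into_rtranclp) auto
  have xu: "?R'\<^sup>*\<^sup>* x u" using assms by (intro r_into_rtranclp) auto
  show ?thesis unfolding connS_def
  proof (intro ballI)
    fix a b assume a: "a \<in> insert x S" and b: "b \<in> insert x S"
    show "?R'\<^sup>*\<^sup>* a b"
    proof (cases "a = x")
      case True
      show ?thesis
      proof (cases "b = x")
        case True with \<open>a = x\<close> show ?thesis by simp
      next
        case False then have "b \<in> S" using b by simp
        then show ?thesis using \<open>a = x\<close> rtranclp_trans[OF xu mono[OF \<open>u \<in> S\<close>]] by simp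
      qed
    next
      case False then have aS: "a \<in> S" using a by simp
      show ?thesis
      proof (cases "b = x")
        case True
        then show ?thesis using rtranclp_trans[OF mono[OF aS \<open>u \<in> S\<close>] ux] by simp
      next
        case False then have "b \<in> S" using b by simp
        then show ?thesis using mono aS by blast
      qed
    qed
  qed
qed

lemma c4_common:
  assumes sg: "sgraph V E" and nk: "\<not> has_Kss V E 2" and "a \<in> V" "b \<in> V" "a \<noteq> b"
  shows "card {y\<in>V. E a y \<and> E b y} \<le> 1"
proof (rule ccontr)
  let ?C = "{y\<in>V. E a y \<and> E b y}"
  assume "\<not> card ?C \<le> 1"
  moreover have "finite ?C" using sg unfolding sgraph_def by simp
  ultimately obtain y1 y2 where y: "y1 \<in> ?C" "y2 \<in> ?C" "y1 \<noteq> y2"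
    using card_le_Suc0_iff_eq[of ?C] by auto
  have irr: "\<not> E v v" if "v \<in> V" for v using sg that unfolding sgraph_def by blast
  have "has_Kss V E 2" unfolding has_Kss_def
    apply (rule exI[of _ "{a,b}"], rule exI[of _ "{y1,y2}"])
    using y assms irr by auto
  with nk show False by simp
qed

lemma embed:
  assumes T: "is_tree VT ET" and sg: "sgraph V E" and WV: "W \<subseteq> V" and Wne: "W \<noteq> {}"
    and nk: "\<not> has_Kss V E 2"
    and deg: "\<forall>v\<in>W. 2 * card VT \<le> card {y\<in>W. E v y}"
  shows "k \<le> card VT \<Longrightarrow> \<exists>S f. card S = k \<and> S \<subseteq> VT \<and> connS ET S \<and> inj_on f S \<and> f ` S \<subseteq> W
      \<and> (\<forall>a\<in>S. \<forall>b\<in>S. ET a b \<longleftrightarrow> E (f a) (f b))"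
proof (induction k)
  case 0
  show ?case by (rule exI[of _ "{}"]) (simp add: connS_def)
next
  case (Suc k)
  have sgT: "sgraph VT ET" using T unfolding is_tree_def by simp
  have finT: "finite VT" using sgT unfolding sgraph_def by simp
  have finV: "finite V" using sg unfolding sgraph_def by simp
  have finW: "finite W" using WV finV finite_subset by blast
  from Suc obtain S f where S: "card S = k" "S \<subseteq> VT" "connS ET S" "inj_on f S" "f ` S \<subseteq> W"
    "\<forall>a\<in>S. \<forall>b\<in>S. ET a b \<longleftrightarrow> E (f a) (f b)" by auto
  have kt: "k < card VT" using Suc by simp
  have "S \<noteq> VT" using kt S by auto
  then obtain z where z: "z \<in> VT" "z \<notin> S" using S by blast
  show ?case
  proof (cases "S = {}")
    case True
    obtain w where "w \<in> W" using Wne by blast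
    have "\<not> ET z z" using sgT z unfolding sgraph_def by blast
    moreover have "\<not> E w w" using sg \<open>w \<in> W\<close> WV unfolding sgraph_def by blast
    ultimately show ?thesis using True S z \<open>w \<in> W\<close>
      by (intro exI[of _ "{z}"] exI[of _ "\<lambda>_. w"]) (auto simp: connS_def)
  next
    case False
    then obtain s where "s \<in> S" by blast
    have "(\<lambda>x y. x \<in> VT \<and> y \<in> VT \<and> ET x y)\<^sup>*\<^sup>* s z"
      using T \<open>s \<in> S\<close> S z unfolding is_tree_def connected_graph_def by blast
    then obtain u x where ux: "u \<in> S" "x \<notin> S" "u \<in> VT" "x \<in> VT" "ET u x"
      using crossing[OF _ \<open>s \<in> S\<close> z(2)] by blast
    have xu: "ET x u" using sgT ux unfolding sgraph_def by blast
    have uniq: "b = u" if "b \<in> S" "ET x b" for b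
      using tree_unique_nbr[OF T S(2) S(3) ux(4) ux(2) that(1) ux(1) that(2) xu] by simp
    define N where "N = {y\<in>W. E (f u) y}"
    define Bad where "Bad = f ` S \<union> (\<Union>z\<in>S - {u}. {y\<in>V. E (f u) y \<and> E (f z) y})"
    have finS: "finite S" using S finT finite_subset by blast
    have c1: "card (f ` S) \<le> k" using card_image_le[OF finS] S by simp
    have c2: "card (\<Union>z\<in>S - {u}. {y\<in>V. E (f u) y \<and> E (f z) y}) \<le> k"
    proof -
      have "card (\<Union>z\<in>S - {u}. {y\<in>V. E (f u) y \<and> E (f z) y})
          \<le> (\<Sum>z\<in>S - {u}. card {y\<in>V. E (f u) y \<and> E (f z) y})"
        using finS by (intro card_UN_le) simp
      also have "\<dots> \<le> (\<Sum>z\<in>S - {u}. 1)"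
      proof (rule sum_mono)
        fix z assume zz: "z \<in> S - {u}"
        have "f z \<noteq> f u" using S(4) zz ux(1) unfolding inj_on_def by blast
        moreover have "f z \<in> V" "f u \<in> V" using S(5) WV zz ux(1) by auto
        ultimately show "card {y\<in>V. E (f u) y \<and> E (f z) y} \<le> 1"
          using c4_common[OF sg nk, of "f u" "f z"] by simp
      qed
      also have "\<dots> \<le> k" using S(1) finS card_mono[OF finS, of "S - {u}"] by auto
      finally show ?thesis .
    qed
    have finBad: "finite Bad" unfolding Bad_def using finS finV by auto
    have "card Bad \<le> card (f ` S) + card (\<Union>z\<in>S - {u}. {y\<in>V. E (f u) y \<and> E (f z) y})"
      unfolding Bad_def by (rule card_Un_le)
    then have cB: "card Bad \<le> 2 * k" using c1 c2 by linarith
    have fuW: "f u \<in> W" using S(5) ux(1) by auto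
    have cN: "2 * card VT \<le> card N" unfolding N_def using deg fuW by blast
    have "\<not> N \<subseteq> Bad"
    proof
      assume "N \<subseteq> Bad"
      then have "card N \<le> card Bad" using card_mono[OF finBad] by blast
      then show False using cB cN kt by linarith
    qed
    then obtain y where y: "y \<in> N" "y \<notin> Bad" by blast
    have yW: "y \<in> W" and fuy: "E (f u) y" using y unfolding N_def by auto
    have yV: "y \<in> V" using yW WV by auto
    have ynotS: "y \<notin> f ` S" using y unfolding Bad_def by simp
    have nb: "\<not> E (f b) y" if "b \<in> S" "b \<noteq> u" for b
      using y(2) that fuy yV unfolding Bad_def by auto
    have symE: "E q p" if "p \<in> V" "q \<in> V" "E p q" for p q
      using sg that unfolding sgraph_def by blast
    have symT: "ET q p" if "p \<in> VT" "q \<in> VT" "ET p q" for p q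
      using sgT that unfolding sgraph_def by blast
    have fSV: "f b \<in> V" if "b \<in> S" for b using that S(5) WV by auto
    define f' where "f' = f(x := y)"
    have f'S: "f' b = f b" if "b \<in> S" for b using that ux(2) unfolding f'_def by auto
    have f'x: "f' x = y" unfolding f'_def by simp
    have inj': "inj_on f' (insert x S)"
      using S(4) ynotS ux(2) unfolding f'_def by (auto simp: inj_on_def image_iff)
    have img': "f' ` insert x S \<subseteq> W" using S(5) yW f'S f'x by auto
    have irrT: "\<not> ET x x" using sgT ux unfolding sgraph_def by blast
    have irrE: "\<not> E y y" using sg yV unfolding sgraph_def by blast
    have xb: "ET x b \<longleftrightarrow> E y (f b)" if "b \<in> S" for b
    proof (cases "b = u")
      case True then show ?thesis using xu fuy symE fSV yV that by blast
    next
      case False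
      have "\<not> ET x b" using uniq that False by blast
      moreover have "\<not> E y (f b)" using nb[OF that False] symE fSV yV that by blast
      ultimately show ?thesis by simp
    qed
    have bx: "ET b x \<longleftrightarrow> E (f b) y" if "b \<in> S" for b
    proof -
      have bT: "b \<in> VT" using that S(2) by blast
      have "ET b x \<longleftrightarrow> ET x b" using symT[OF bT ux(4)] symT[OF ux(4) bT] by blast
      moreover have "E (f b) y \<longleftrightarrow> E y (f b)" using symE[OF fSV[OF that] yV] symE[OF yV fSV[OF that]] by blast
      ultimately show ?thesis using xb[OF that] by simp
    qed
    have ind': "\<forall>a\<in>insert x S. \<forall>b\<in>insert x S. ET a b \<longleftrightarrow> E (f' a) (f' b)"
    proof (intro ballI)
      fix a b assume a: "a \<in> insert x S" and b: "b \<in> insert x S"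
      show "ET a b \<longleftrightarrow> E (f' a) (f' b)"
      proof (cases "a = x")
        case True
        show ?thesis
        proof (cases "b = x")
          case True then show ?thesis using \<open>a = x\<close> irrT irrE f'x by simp
        next
          case False then have "b \<in> S" using b by simp
          then show ?thesis using \<open>a = x\<close> xb f'x f'S by simp
        qed
      next
        case False then have aS: "a \<in> S" using a by simp
        show ?thesis
        proof (cases "b = x")
          case True then show ?thesis using aS bx f'x f'S by simp
        next
          case False then have "b \<in> S" using b by simp
          then show ?thesis using aS S(6) f'S by simp
        qed
      qed
    qed
    have "card (insert x S) = Suc k" using finS ux(2) S(1) by simp
    moreover have "insert x S \<subseteq> VT" using S(2) ux(4) by simp
    moreover have "connS ET (insert x S)" using connS_insert[OF S(3) ux(1) ux(5) xu] .
    ultimately show ?thesis using inj' img' ind' by blast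
  qed
qed

lemma finite_edges: "finite W \<Longrightarrow> finite (edges W E)"
proof -
  assume "finite W"
  have "edges W E \<subseteq> (\<lambda>(u,v). {u,v}) ` (W \<times> W)" unfolding edges_def by auto
  then show ?thesis using \<open>finite W\<close> finite_subset by blast
qed

lemma edges_bound:
  assumes sg: "sgraph V E" and nk: "\<not> has_Kss V E 2" and T: "is_tree VT ET"
    and ni: "\<not> has_induced_copy V E VT ET"
  shows "W \<subseteq> V \<Longrightarrow> card (edges W E) \<le> 2 * card VT * card W"
proof (induction "card W" arbitrary: W rule: less_induct)
  case less
  have finV: "finite V" using sg unfolding sgraph_def by simp
  have finW: "finite W" using less.prems finV finite_subset by blast
  show ?case
  proof (cases "\<exists>v\<in>W. card {y\<in>W. E v y} < 2 * card VT")
    case True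
    then obtain v where v: "v \<in> W" "card {y\<in>W. E v y} < 2 * card VT" by blast
    have sub: "edges W E \<subseteq> edges (W - {v}) E \<union> (\<lambda>y. {v,y}) ` {y\<in>W. E v y}"
    proof
      fix e assume "e \<in> edges W E"
      then obtain a b where e: "e = {a,b}" "a \<in> W" "b \<in> W" "E a b" unfolding edges_def by blast
      have "E b a" using sg e less.prems unfolding sgraph_def by blast
      show "e \<in> edges (W - {v}) E \<union> (\<lambda>y. {v,y}) ` {y\<in>W. E v y}"
      proof (cases "a = v \<or> b = v")
        case True
        then show ?thesis using e \<open>E b a\<close> by (auto simp: insert_commute)
      next
        case False
        then show ?thesis using e unfolding edges_def by blast
      qed
    qed
    have "card (edges W E) \<le> card (edges (W - {v}) E) + card ((\<lambda>y. {v,y}) ` {y\<in>W. E v y})"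
      using card_mono[OF _ sub] finite_edges finW card_Un_le
      by (metis (no_types, lifting) finite_Diff finite_Un finite_imageI finite_subset le_trans mem_Collect_eq subsetI)
    also have "\<dots> \<le> 2 * card VT * card (W - {v}) + 2 * card VT"
    proof (rule add_mono)
      show "card (edges (W - {v}) E) \<le> 2 * card VT * card (W - {v})"
        using less.hyps[of "W - {v}"] less.prems v finW
        by (meson Diff_subset card_Diff1_less order_trans)
      show "card ((\<lambda>y. {v,y}) ` {y\<in>W. E v y}) \<le> 2 * card VT"
        using card_image_le[of "{y\<in>W. E v y}" "\<lambda>y. {v,y}"] finW v by simp
    qed
    also have "\<dots> = 2 * card VT * card W"
    proof -
      have "card W = card (W - {v}) + 1" using v finW
        by (metis One_nat_def Suc_pred add.commute card_Diff_singleton card_gt_0_iff empty_iff plus_1_eq_Suc)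
      then show ?thesis by (simp add: algebra_simps)
    qed
    finally show ?thesis .
  next
    case False
    show ?thesis
    proof (cases "W = {}")
      case True
      then show ?thesis unfolding edges_def by simp
    next
      case Wne: False
      have deg: "\<forall>v\<in>W. 2 * card VT \<le> card {y\<in>W. E v y}" using False by auto
      obtain S f where S: "card S = card VT" "S \<subseteq> VT" "inj_on f S" "f ` S \<subseteq> W"
        "\<forall>a\<in>S. \<forall>b\<in>S. ET a b \<longleftrightarrow> E (f a) (f b)"
        using embed[OF T sg less.prems Wne nk deg, of "card VT"] by auto
      have finT: "finite VT" using T unfolding is_tree_def sgraph_def by simp
      have "S = VT" using card_subset_eq[OF finT S(2) S(1)] .
      have "has_induced_copy V E VT ET" unfolding has_induced_copy_def
      proof (intro exI[of _ f] conjI)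
        show "inj_on f VT" using S(3) \<open>S = VT\<close> by simp
        show "f ` VT \<subseteq> V" using S(4) less.prems \<open>S = VT\<close> by blast
        show "\<forall>u\<in>VT. \<forall>v\<in>VT. ET u v \<longleftrightarrow> E (f u) (f v)" using S(5) \<open>S = VT\<close> by simp
      qed
      with ni show ?thesis by simp
    qed
  qed
qed

theorem proposition3p2:
  fixes VT :: "'b set" and ET :: "'b \<Rightarrow> 'b \<Rightarrow> bool"
    and V :: "'a set" and E :: "'a \<Rightarrow> 'a \<Rightarrow> bool"
    and t n :: nat
  assumes "is_tree VT ET" and "card VT = t"
    and "sgraph V E" and "card V = n" and "n \<ge> 1"
    and "\<not> has_Kss V E 2"
    and "\<not> has_induced_copy V E VT ET"
  shows "card (edges V E) \<le> 2 * t * n"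
  using edges_bound[OF assms(3) assms(6) assms(1) assms(7), of V] assms(2) assms(4) by simp

end
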